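(* Consider an ensemble of $m$ learners $l_1,\dots,l_m$ processing a data stream of $n$ data elements, where $e_i$ denotes an access to the data structures of learner $l_i$ and $e_1,\dots,e_m$ are distinct, so that the training phase accesses each $e_i$ exactly $n$ times. Mini-batching provides optimal access locality: taking a single mini-batch containing the whole stream yields the trace $e_1^n e_2^n\cdots e_m^n$ (each $e_i$ accessed $n$ consecutive times, learner after learner), whose total reuse distance is $m(m+n-1)=\mathcal{O}(m^2)$ for fixed mini-batch size, and no other ordering of these accesses has a smaller total reuse distance.
   Context: A trace is a finite sequence of references to data items. The reuse distance of an access in a trace is the number of distinct data items accessed since the previous access to the same item, including the reused item itself (so a finite reuse distance is at least $1$ and at most the number $m$ of distinct items). The reuse distance of the first access to an item is $\infty$; in computing totals, every such infinite value is replaced by $m$. The total reuse distance of a trace is the sum of the reuse distances of all its accesses (with this convention). *)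

theory Defs
  imports Main
begin

text \<open>If there is a previous access to the same item, with the most recent one at
  position i, the distance is the number of distinct items accessed at positions
  i+1..j (this includes the reused item itself, accessed at j).
  For a first access the (infinite) distance is replaced by m = card (set t),
  the number of distinct items of the trace.\<close>
definition reuse_distance :: "'a list \<Rightarrow> nat \<Rightarrow> nat" where
  "reuse_distance t j =
     (if \<exists>i<j. t ! i = t ! j
      then (let i = (GREATEST i. i < j \<and> t ! i = t ! j)
            in card (set (drop (i + 1) (take (j + 1) t))))
      else card (set t))"

definition total_reuse_distance :: "'a list \<Rightarrow> nat" where
  "total_reuse_distance t = (\<Sum>j<length t. reuse_distance t j)"

definition minibatch_trace :: "nat \<Rightarrow> nat \<Rightarrow> (nat \<Rightarrow> 'a) \<Rightarrow> 'a list" where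
  "minibatch_trace m n e = concat (map (\<lambda>i. replicate n (e i)) [1..<m+1])"

end

theory Submission
  imports Defs
begin

lemma rd_one:
  assumes "j < length t" "0 < j" "t ! (j-1) = t ! j"
  shows "reuse_distance t j = 1"
proof -
  have ex: "\<exists>i<j. t ! i = t ! j" using assms by (intro exI[of _ "j-1"]) auto
  have g: "(GREATEST i. i < j \<and> t ! i = t ! j) = j - 1"
    by (rule Greatest_equality) (use assms in auto)
  have "drop j (take (j + 1) t) = [t ! j]"
    using assms(1) by (simp add: take_Suc_conv_app_nth)
  then show ?thesis using ex g assms(2) by (simp add: reuse_distance_def Let_def)
qed

lemma rd_ge1:
  assumes "j < length t" "\<exists>i<j. t ! i = t ! j"
  shows "reuse_distance t j \<ge> 1"
proof -
  define i where "i = (GREATEST i. i < j \<and> t ! i = t ! j)"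
  have "i < j \<and> t ! i = t ! j" unfolding i_def
    using assms(2) by (rule GreatestI_ex_nat[where b=j]) auto
  then have "drop (i + 1) (take (j + 1) t) \<noteq> []" using assms(1) by simp
  then have "card (set (drop (i + 1) (take (j + 1) t))) \<ge> 1"
    by (simp add: Suc_le_eq card_gt_0_iff)
  then show ?thesis using assms(2) by (simp add: reuse_distance_def Let_def i_def)
qed

definition firsts :: "'a list \<Rightarrow> nat set" where
  "firsts t = {j. j < length t \<and> \<not> (\<exists>i<j. t ! i = t ! j)}"

lemma card_firsts: "card (firsts t) = card (set t)"
proof -
  have "bij_betw (nth t) (firsts t) (set t)"
    unfolding bij_betw_def
  proof
    show "inj_on (nth t) (firsts t)"
      unfolding inj_on_def firsts_def by (metis (mono_tags, lifting) mem_Collect_eq nat_neq_iff)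
    show "nth t ` firsts t = set t"
    proof
      show "nth t ` firsts t \<subseteq> set t" unfolding firsts_def by auto
      show "set t \<subseteq> nth t ` firsts t"
      proof
        fix x assume "x \<in> set t"
        then obtain k where k: "k < length t" "t ! k = x" by (auto simp: in_set_conv_nth)
        define j where "j = (LEAST j. t ! j = x)"
        have j: "t ! j = x" unfolding j_def using LeastI[of "\<lambda>j. t ! j = x" k] k(2) by blast
        have "j \<le> k" unfolding j_def using Least_le[of "\<lambda>j. t ! j = x" k] k(2) by blast
        moreover have "\<not> (\<exists>i<j. t ! i = t ! j)"
        proof
          assume "\<exists>i<j. t ! i = t ! j"
          then obtain i where "i < j" "t ! i = x" using j by auto
          then show False using not_less_Least[of i "\<lambda>j. t ! j = x"] unfolding j_def by blast
        qed
        ultimately show "x \<in> nth t ` firsts t" using k j unfolding firsts_def by (intro image_eqI[of _ _ j]) auto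
      qed
    qed
  qed
  then show ?thesis by (rule bij_betw_same_card)
qed

lemma total_split:
  "total_reuse_distance t = card (set t) * card (set t)
     + (\<Sum>j\<in>{..<length t} - firsts t. reuse_distance t j)"
proof -
  have sub: "firsts t \<subseteq> {..<length t}" unfolding firsts_def by auto
  have "total_reuse_distance t = (\<Sum>j\<in>{..<length t} - firsts t. reuse_distance t j)
      + (\<Sum>j\<in>firsts t. reuse_distance t j)"
    unfolding total_reuse_distance_def by (rule sum.subset_diff[OF sub]) auto
  moreover have "(\<Sum>j\<in>firsts t. reuse_distance t j) = (\<Sum>j\<in>firsts t. card (set t))"
    by (rule sum.cong) (auto simp: firsts_def reuse_distance_def)
  ultimately show ?thesis using card_firsts[of t] by simp
qed

lemma total_lower:
  "total_reuse_distance t \<ge> card (set t) * card (set t) + (length t - card (set t))"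
proof -
  have sub: "firsts t \<subseteq> {..<length t}" unfolding firsts_def by auto
  have "card ({..<length t} - firsts t) = length t - card (set t)"
    using sub card_firsts[of t] by (simp add: card_Diff_subset finite_subset)
  moreover have "(\<Sum>j\<in>{..<length t} - firsts t. (1::nat)) \<le> (\<Sum>j\<in>{..<length t} - firsts t. reuse_distance t j)"
  proof (rule sum_mono)
    fix j assume "j \<in> {..<length t} - firsts t"
    then have "j < length t" "\<exists>i<j. t ! i = t ! j" unfolding firsts_def by auto
    then show "1 \<le> reuse_distance t j" by (rule rd_ge1)
  qed
  ultimately show ?thesis using total_split[of t] by simp
qed

lemma total_exact:
  assumes "\<And>j. j < length t \<Longrightarrow> j \<notin> firsts t \<Longrightarrow> 0 < j \<and> t ! (j-1) = t ! j"
  shows "total_reuse_distance t = card (set t) * card (set t) + (length t - card (set t))"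
proof -
  have sub: "firsts t \<subseteq> {..<length t}" unfolding firsts_def by auto
  have "card ({..<length t} - firsts t) = length t - card (set t)"
    using sub card_firsts[of t] by (simp add: card_Diff_subset finite_subset)
  moreover have "(\<Sum>j\<in>{..<length t} - firsts t. reuse_distance t j) = (\<Sum>j\<in>{..<length t} - firsts t. (1::nat))"
    by (rule sum.cong) (use assms rd_one in auto)
  ultimately show ?thesis using total_split[of t] by simp
qed

lemma mb_suc: "minibatch_trace (Suc m) n e = minibatch_trace m n e @ replicate n (e (Suc m))"
  by (simp add: minibatch_trace_def)

lemma mb_length: "length (minibatch_trace m n e) = m * n"
  by (induction m) (auto simp: mb_suc, simp add: minibatch_trace_def)

lemma mb_set: "n \<ge> 1 \<Longrightarrow> set (minibatch_trace m n e) = e ` {1..m}"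
proof (induction m)
  case 0 then show ?case by (simp add: minibatch_trace_def)
next
  case (Suc m)
  have "{1..Suc m} = insert (Suc m) {1..m}" by auto
  then show ?case using Suc by (simp add: mb_suc)
qed

lemma mb_nth: "j < m * n \<Longrightarrow> minibatch_trace m n e ! j = e (j div n + 1)"
proof (induction m)
  case 0 then show ?case by simp
next
  case (Suc m)
  show ?case
  proof (cases "j < m * n")
    case True then show ?thesis using Suc by (simp add: mb_suc nth_append mb_length)
  next
    case False
    then have "j div n = m" using Suc.prems
      by (metis add.commute div_nat_eqI mult.commute mult_Suc not_le)
    then show ?thesis using False Suc.prems by (simp add: mb_suc nth_append mb_length)
  qed
qed

theorem theorem3:
  fixes m n :: nat and e :: "nat \<Rightarrow> 'a"
  assumes "inj_on e {1..m}" and "n \<ge> 1"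
  shows "total_reuse_distance (minibatch_trace m n e) = m * (m + n - 1)
    \<and> (\<forall>t :: 'a list.
          (\<forall>x. count_list t x = (if x \<in> e ` {1..m} then n else 0))
          \<longrightarrow> total_reuse_distance (minibatch_trace m n e) \<le> total_reuse_distance t)"
proof -
  let ?t = "minibatch_trace m n e"
  have cardE: "card (e ` {1..m}) = m" using assms(1) by (simp add: card_image)
  have eq: "m * m + (m * n - m) = m * (m + n - 1)" using assms(2)
    by (simp add: algebra_simps diff_mult_distrib2)
  have main: "total_reuse_distance ?t = m * (m + n - 1)"
  proof -
    have "total_reuse_distance ?t = card (set ?t) * card (set ?t) + (length ?t - card (set ?t))"
    proof (rule total_exact)
      fix j assume j: "j < length ?t" "j \<notin> firsts ?t"
      then obtain i where i: "i < j" "?t ! i = ?t ! j" unfolding firsts_def by auto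
      have jl: "j < m * n" using j mb_length by metis
      have "e (i div n + 1) = e (j div n + 1)" using i jl mb_nth[of i m n e] mb_nth[of j m n e] by simp
      moreover have "i div n + 1 \<in> {1..m}" "j div n + 1 \<in> {1..m}" using jl i
        by (auto intro!: Suc_leI less_mult_imp_div_less)
      ultimately have "i div n + 1 = j div n + 1" by (rule inj_onD[OF assms(1)])
      then have d: "i div n = j div n" by simp
      have "i div n \<le> (j - 1) div n" "(j - 1) div n \<le> j div n" using i by (auto intro: div_le_mono)
      then have "(j - 1) div n = j div n" using d by simp
      then show "0 < j \<and> ?t ! (j - 1) = ?t ! j" using i jl mb_nth[of "j-1" m n e] mb_nth[of j m n e] by simp
    qed
    moreover have "set ?t = e ` {1..m}" by (rule mb_set[OF assms(2)])
    ultimately show ?thesis using cardE mb_length[of m n e] eq by simp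
  qed
  moreover have "\<forall>t :: 'a list.
          (\<forall>x. count_list t x = (if x \<in> e ` {1..m} then n else 0))
          \<longrightarrow> total_reuse_distance ?t \<le> total_reuse_distance t"
  proof (intro allI impI)
    fix t :: "'a list"
    assume c: "\<forall>x. count_list t x = (if x \<in> e ` {1..m} then n else 0)"
    have st: "set t = e ` {1..m}"
    proof
      show "set t \<subseteq> e ` {1..m}"
      proof
        fix x assume "x \<in> set t"
        then have "count_list t x \<noteq> 0" by (simp add: count_list_0_iff)
        then show "x \<in> e ` {1..m}" using c by (auto split: if_splits)
      qed
      show "e ` {1..m} \<subseteq> set t"
      proof
        fix x assume "x \<in> e ` {1..m}"
        then have "count_list t x \<noteq> 0" using c assms(2) by simp
        then show "x \<in> set t" by (simp add: count_list_0_iff)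
      qed
    qed
    have "length t = sum (count_list t) (e ` {1..m})" using st by (simp add: sum_count_set)
    also have "\<dots> = sum (\<lambda>_. n) (e ` {1..m})" using c by (intro sum.cong) auto
    also have "\<dots> = m * n" using cardE by simp
    finally have "length t = m * n" .
    then have "total_reuse_distance t \<ge> m * (m + n - 1)"
      using total_lower[of t] st cardE eq by simp
    then show "total_reuse_distance ?t \<le> total_reuse_distance t" using main by simp
  qed
  ultimately show ?thesis by blast
qed

end
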